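(* Let $\mathcal{SB}=\langle\mathcal{L},A,\to,\text{supp}\rangle$ be a saturated SBAF. Then every preferred extension $E\subseteq A$ of $\langle A,\to\rangle$ is a confident weakly coherent argument extension.
   Context: A language is a triple $\mathcal{L}=\langle L,\overline{\cdot},n\rangle$: $L$ is a nonempty set of sentences; $\overline{\cdot}$ assigns to each $s\in L$ a set $\overline{s}\subseteq L$ of sentences incompatible with $s$, and is symmetric; $n$ is a partial naming function assigning to an argument $a$ a sentence $n(a)\in L$ (if undefined, put $\overline{n(a)}:=\emptyset$), with $\overline{n(\langle\{t\},t\rangle)}=\emptyset$. An argument is a pair $a=\langle Prem(a),Conc(a)\rangle$ with $Prem(a)$ a nonempty finite subset of $L$ and $Conc(a)\in L$; $Sent(a):=Prem(a)\cup\{Conc(a)\}$, $Sent(E):=\bigcup_{a\in E}Sent(a)$. The minimal argument for $s$ is $\langle\{s\},s\rangle$. A set $E$ supports $a$ if $Prem(a)\subseteq Sent(E)$; $E$ contains undercutting information for $a$ if $\overline{n(a)}\cap Sent(E)\neq\emptyset$. Argument $a$ attacks $b$ ($a\to b$) if $Conc(a)\in\overline{s}$ for some $s\in Sent(b)$ or $Conc(a)\in\overline{n(b)}$. An SBAF is $\langle\mathcal{L},A,\to,\text{supp}\rangle$ with $A$ a finite set of arguments. For $E\subseteq A$: $E$ defends $a\in A$ if for every $b\in A$ with $b\to a$ some element of $E$ attacks $b$; $E$ is conflict-free if no $a,b\in E$ with $a\to b$; admissible if conflict-free and defends all its elements; preferred if $\subseteq$-maximal among admissible sets. $E$ is weakly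 coherent if it is admissible and every $a\in A$ supported by $E$, for which $E$ contains no undercutting information and which $E$ defends, belongs to $E$. $S$ is compatible if no $s,t\in S$ with $s\in\overline t$. $Arg_s(S):=\{a\in A\mid Prem(a)\subseteq S\text{ and }\overline{n(a)}\cap S=\emptyset\}$; $R^S(E):=\{a\in A\mid a\in Arg_s(S)\text{ and }E\text{ defends }a\}$. For compatible $S$, $Init(S)$ is the largest admissible subset of $\{a\in A\mid Sent(a)\subseteq S\text{ and }\overline{n(a)}\cap S=\emptyset\}$, and $Arg_w(S)$ is the $\subseteq$-least set $E$ with $Init(S)\subseteq E$ and $R^S(E)=E$. A weakly adequate language extension is a compatible $S\subseteq Sent(A)$ with $Sent(a)\subseteq S$ for all $a\in Arg_w(S)$; it is confident if it is $\subseteq$-maximal among weakly adequate language extensions. An argument extension $E$ is confident weakly coherent if it is weakly coherent and $E=Arg_w(S)$ for some confident weakly adequate language extension $S$. The SBAF is saturated if (i) for every $s\in Sent(A)$ for which some $t\in Sent(A)\cap\overline{s}$ exists, $A$ contains the minimal argument for $s$ or the minimal argument for $t$, and (ii) for every $u\in Sent(A)$ with $u\in\overline{n(a)}$ for some $a\in A$, $A$ contains the minimal argument for $u$. *)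

theory Defs
  imports Main
begin

type_synonym 's arg = "'s set \<times> 's"

definition Prem :: "'s arg \<Rightarrow> 's set" where "Prem a = fst a"
definition Conc :: "'s arg \<Rightarrow> 's" where "Conc a = snd a"
definition Sent :: "'s arg \<Rightarrow> 's set" where "Sent a = Prem a \<union> {Conc a}"
definition SentS :: "'s arg set \<Rightarrow> 's set" where "SentS E = (\<Union>a\<in>E. Sent a)"
definition minarg :: "'s \<Rightarrow> 's arg" where "minarg s = ({s}, s)"

definition nbar :: "('s \<Rightarrow> 's set) \<Rightarrow> ('s arg \<Rightarrow> 's option) \<Rightarrow> 's arg \<Rightarrow> 's set" where
  "nbar inc nm a = (case nm a of None \<Rightarrow> {} | Some s \<Rightarrow> inc s)"

definition language :: "'s set \<Rightarrow> ('s \<Rightarrow> 's set) \<Rightarrow> ('s arg \<Rightarrow> 's option) \<Rightarrow> bool" where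
  "language L inc nm \<longleftrightarrow> L \<noteq> {}
     \<and> (\<forall>s\<in>L. inc s \<subseteq> L)
     \<and> (\<forall>s\<in>L. \<forall>t\<in>L. s \<in> inc t \<longleftrightarrow> t \<in> inc s)
     \<and> (\<forall>a s. nm a = Some s \<longrightarrow> s \<in> L)
     \<and> (\<forall>t\<in>L. nbar inc nm (minarg t) = {})"

definition is_argument :: "'s set \<Rightarrow> 's arg \<Rightarrow> bool" where
  "is_argument L a \<longleftrightarrow> Prem a \<noteq> {} \<and> finite (Prem a) \<and> Prem a \<subseteq> L \<and> Conc a \<in> L"

(* SBAF <L, A, ->, supp>: attack and support are determined by the language *)
definition SBAF :: "'s set \<Rightarrow> ('s \<Rightarrow> 's set) \<Rightarrow> ('s arg \<Rightarrow> 's option) \<Rightarrow> 's arg set \<Rightarrow> bool" where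
  "SBAF L inc nm A \<longleftrightarrow> language L inc nm \<and> finite A \<and> (\<forall>a\<in>A. is_argument L a)"

definition supports :: "'s arg set \<Rightarrow> 's arg \<Rightarrow> bool" where
  "supports E a \<longleftrightarrow> Prem a \<subseteq> SentS E"

definition undercut_info :: "('s \<Rightarrow> 's set) \<Rightarrow> ('s arg \<Rightarrow> 's option) \<Rightarrow> 's arg set \<Rightarrow> 's arg \<Rightarrow> bool" where
  "undercut_info inc nm E a \<longleftrightarrow> nbar inc nm a \<inter> SentS E \<noteq> {}"

definition attacks :: "('s \<Rightarrow> 's set) \<Rightarrow> ('s arg \<Rightarrow> 's option) \<Rightarrow> 's arg \<Rightarrow> 's arg \<Rightarrow> bool" where
  "attacks inc nm a b \<longleftrightarrow> (\<exists>s\<in>Sent b. Conc a \<in> inc s) \<or> Conc a \<in> nbar inc nm b"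

definition defends :: "('s \<Rightarrow> 's set) \<Rightarrow> ('s arg \<Rightarrow> 's option) \<Rightarrow> 's arg set \<Rightarrow> 's arg set \<Rightarrow> 's arg \<Rightarrow> bool" where
  "defends inc nm A E a \<longleftrightarrow> (\<forall>b\<in>A. attacks inc nm b a \<longrightarrow> (\<exists>c\<in>E. attacks inc nm c b))"

definition conflict_free :: "('s \<Rightarrow> 's set) \<Rightarrow> ('s arg \<Rightarrow> 's option) \<Rightarrow> 's arg set \<Rightarrow> bool" where
  "conflict_free inc nm E \<longleftrightarrow> (\<forall>a\<in>E. \<forall>b\<in>E. \<not> attacks inc nm a b)"

definition admissible :: "('s \<Rightarrow> 's set) \<Rightarrow> ('s arg \<Rightarrow> 's option) \<Rightarrow> 's arg set \<Rightarrow> 's arg set \<Rightarrow> bool" where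
  "admissible inc nm A E \<longleftrightarrow> E \<subseteq> A \<and> conflict_free inc nm E \<and> (\<forall>a\<in>E. defends inc nm A E a)"

definition preferred :: "('s \<Rightarrow> 's set) \<Rightarrow> ('s arg \<Rightarrow> 's option) \<Rightarrow> 's arg set \<Rightarrow> 's arg set \<Rightarrow> bool" where
  "preferred inc nm A E \<longleftrightarrow> admissible inc nm A E
     \<and> (\<forall>F. admissible inc nm A F \<and> E \<subseteq> F \<longrightarrow> F = E)"

definition weakly_coherent :: "('s \<Rightarrow> 's set) \<Rightarrow> ('s arg \<Rightarrow> 's option) \<Rightarrow> 's arg set \<Rightarrow> 's arg set \<Rightarrow> bool" where
  "weakly_coherent inc nm A E \<longleftrightarrow> admissible inc nm A E
     \<and> (\<forall>a\<in>A. supports E a \<and> \<not> undercut_info inc nm E a \<and> defends inc nm A E a \<longrightarrow> a \<in> E)"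

definition compatible :: "('s \<Rightarrow> 's set) \<Rightarrow> 's set \<Rightarrow> bool" where
  "compatible inc S \<longleftrightarrow> (\<forall>s\<in>S. \<forall>t\<in>S. s \<notin> inc t)"

definition Arg_s :: "('s \<Rightarrow> 's set) \<Rightarrow> ('s arg \<Rightarrow> 's option) \<Rightarrow> 's arg set \<Rightarrow> 's set \<Rightarrow> 's arg set" where
  "Arg_s inc nm A S = {a\<in>A. Prem a \<subseteq> S \<and> nbar inc nm a \<inter> S = {}}"

definition R_S :: "('s \<Rightarrow> 's set) \<Rightarrow> ('s arg \<Rightarrow> 's option) \<Rightarrow> 's arg set \<Rightarrow> 's set \<Rightarrow> 's arg set \<Rightarrow> 's arg set" where
  "R_S inc nm A S E = {a\<in>A. a \<in> Arg_s inc nm A S \<and> defends inc nm A E a}"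

definition is_Init :: "('s \<Rightarrow> 's set) \<Rightarrow> ('s arg \<Rightarrow> 's option) \<Rightarrow> 's arg set \<Rightarrow> 's set \<Rightarrow> 's arg set \<Rightarrow> bool" where
  "is_Init inc nm A S I \<longleftrightarrow>
     (let X = {a\<in>A. Sent a \<subseteq> S \<and> nbar inc nm a \<inter> S = {}} in
        I \<subseteq> X \<and> admissible inc nm A I
        \<and> (\<forall>J. J \<subseteq> X \<and> admissible inc nm A J \<longrightarrow> J \<subseteq> I))"

definition is_Arg_w :: "('s \<Rightarrow> 's set) \<Rightarrow> ('s arg \<Rightarrow> 's option) \<Rightarrow> 's arg set \<Rightarrow> 's set \<Rightarrow> 's arg set \<Rightarrow> bool" where
  "is_Arg_w inc nm A S E \<longleftrightarrow> (\<exists>I. is_Init inc nm A S I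
     \<and> I \<subseteq> E \<and> R_S inc nm A S E = E
     \<and> (\<forall>F. I \<subseteq> F \<and> R_S inc nm A S F = F \<longrightarrow> E \<subseteq> F))"

definition weakly_adequate :: "('s \<Rightarrow> 's set) \<Rightarrow> ('s arg \<Rightarrow> 's option) \<Rightarrow> 's arg set \<Rightarrow> 's set \<Rightarrow> bool" where
  "weakly_adequate inc nm A S \<longleftrightarrow> compatible inc S \<and> S \<subseteq> SentS A
     \<and> (\<forall>E. is_Arg_w inc nm A S E \<longrightarrow> (\<forall>a\<in>E. Sent a \<subseteq> S))"

definition confident :: "('s \<Rightarrow> 's set) \<Rightarrow> ('s arg \<Rightarrow> 's option) \<Rightarrow> 's arg set \<Rightarrow> 's set \<Rightarrow> bool" where
  "confident inc nm A S \<longleftrightarrow> weakly_adequate inc nm A S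
     \<and> (\<forall>T. weakly_adequate inc nm A T \<and> S \<subseteq> T \<longrightarrow> T = S)"

definition confident_weakly_coherent :: "('s \<Rightarrow> 's set) \<Rightarrow> ('s arg \<Rightarrow> 's option) \<Rightarrow> 's arg set \<Rightarrow> 's arg set \<Rightarrow> bool" where
  "confident_weakly_coherent inc nm A E \<longleftrightarrow> weakly_coherent inc nm A E
     \<and> (\<exists>S. confident inc nm A S \<and> is_Arg_w inc nm A S E)"

definition saturated :: "('s \<Rightarrow> 's set) \<Rightarrow> ('s arg \<Rightarrow> 's option) \<Rightarrow> 's arg set \<Rightarrow> bool" where
  "saturated inc nm A \<longleftrightarrow>
     (\<forall>s\<in>SentS A. \<forall>t\<in>SentS A. t \<in> inc s \<longrightarrow> minarg s \<in> A \<or> minarg t \<in> A)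
     \<and> (\<forall>u\<in>SentS A. (\<exists>a\<in>A. u \<in> nbar inc nm a) \<longrightarrow> minarg u \<in> A)"

end

theory Submission
  imports Defs
begin

lemma defends_mono:
  "defends inc nm A E a \<Longrightarrow> E \<subseteq> F \<Longrightarrow> defends inc nm A F a"
  unfolding defends_def by blast

lemma fund:
  assumes "preferred inc nm A E" "a \<in> A" "defends inc nm A E a"
  shows "a \<in> E"
proof -
  have adm: "admissible inc nm A E" using assms(1) preferred_def by blast
  hence cf: "\<And>x y. x \<in> E \<Longrightarrow> y \<in> E \<Longrightarrow> \<not> attacks inc nm x y"
    and sub: "E \<subseteq> A" and def: "\<And>x. x \<in> E \<Longrightarrow> defends inc nm A E x"
    unfolding admissible_def conflict_free_def by blast+
  have n1: "\<not> attacks inc nm b a" if "b \<in> E" for b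
    using assms(3) cf that sub unfolding defends_def by blast
  have n2: "\<not> attacks inc nm a b" if "b \<in> E" for b
    using def[OF that] n1 assms(2) unfolding defends_def by blast
  have n3: "\<not> attacks inc nm a a"
    using assms(3) n1 assms(2) unfolding defends_def by blast
  have "admissible inc nm A (insert a E)"
    unfolding admissible_def conflict_free_def
  proof (intro conjI ballI)
    show "insert a E \<subseteq> A" using sub assms(2) by blast
  next
    fix x y assume "x \<in> insert a E" "y \<in> insert a E"
    thus "\<not> attacks inc nm x y" using cf n1 n2 n3 by blast
  next
    fix x assume x: "x \<in> insert a E"
    have "defends inc nm A E x" using x def assms(3) by blast
    thus "defends inc nm A (insert a E) x" using defends_mono by blast
  qed
  thus ?thesis using assms(1) unfolding preferred_def by blast
qed

lemma Arg_w_unique: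
  assumes "is_Arg_w inc nm A T W1" "is_Arg_w inc nm A T W2"
  shows "W1 = W2"
proof -
  obtain I1 where I1: "is_Init inc nm A T I1" "I1 \<subseteq> W1" "R_S inc nm A T W1 = W1"
    "\<forall>F. I1 \<subseteq> F \<and> R_S inc nm A T F = F \<longrightarrow> W1 \<subseteq> F"
    using assms(1) unfolding is_Arg_w_def by blast
  obtain I2 where I2: "is_Init inc nm A T I2" "I2 \<subseteq> W2" "R_S inc nm A T W2 = W2"
    "\<forall>F. I2 \<subseteq> F \<and> R_S inc nm A T F = F \<longrightarrow> W2 \<subseteq> F"
    using assms(2) unfolding is_Arg_w_def by blast
  have "I1 \<subseteq> I2" using I1(1) I2(1) unfolding is_Init_def Let_def by (elim conjE) (erule allE, erule mp, rule conjI)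
  moreover have "I2 \<subseteq> I1" using I1(1) I2(1) unfolding is_Init_def Let_def by (elim conjE) (erule allE, erule mp, rule conjI)
  ultimately have "I1 = I2" by (rule antisym)
  have "W1 \<subseteq> W2" using I1(4) I2(2,3) \<open>I1 = I2\<close> by blast
  moreover have "W2 \<subseteq> W1" using I2(4) I1(2,3) \<open>I1 = I2\<close> by blast
  ultimately show ?thesis by (rule antisym)
qed

locale ctx =
  fixes L :: "'s set" and inc :: "'s \<Rightarrow> 's set" and nm :: "'s arg \<Rightarrow> 's option"
    and A :: "'s arg set" and E :: "'s arg set"
  assumes sb: "SBAF L inc nm A"
    and sat: "saturated inc nm A"
    and pref: "preferred inc nm A E"
begin

lemma adm: "admissible inc nm A E" using pref preferred_def by blast
lemma EA: "E \<subseteq> A" using adm admissible_def by blast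
lemma cf: "x \<in> E \<Longrightarrow> y \<in> E \<Longrightarrow> \<not> attacks inc nm x y"
  using adm unfolding admissible_def conflict_free_def by blast
lemma defE: "x \<in> E \<Longrightarrow> defends inc nm A E x"
  using adm unfolding admissible_def by blast

lemma lang: "language L inc nm" using sb SBAF_def by blast

lemma SentL: "a \<in> A \<Longrightarrow> Sent a \<subseteq> L"
  using sb unfolding SBAF_def is_argument_def Sent_def by blast

lemma SentSA_L: "SentS A \<subseteq> L" using SentL unfolding SentS_def by blast

lemma SentS_mono: "SentS E \<subseteq> SentS A" using EA unfolding SentS_def by blast

lemma symm: "s \<in> L \<Longrightarrow> t \<in> L \<Longrightarrow> s \<in> inc t \<Longrightarrow> t \<in> inc s"
proof -
  assume h: "s \<in> L" "t \<in> L" "s \<in> inc t"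
  have "\<forall>s\<in>L. \<forall>t\<in>L. s \<in> inc t \<longleftrightarrow> t \<in> inc s" using lang by (simp add: language_def)
  thus ?thesis using h by simp
qed

lemma nbar_min: "t \<in> L \<Longrightarrow> nbar inc nm (minarg t) = {}"
proof -
  assume h: "t \<in> L"
  have "\<forall>t\<in>L. nbar inc nm (minarg t) = {}" using lang by (simp add: language_def)
  thus ?thesis using h by simp
qed

lemma Sent_min: "Sent (minarg t) = {t}" "Conc (minarg t) = t"
  unfolding Sent_def minarg_def Prem_def Conc_def by auto

lemma gen:
  assumes "u \<in> SentS A" "minarg u \<in> A" "a \<in> E" "attacks inc nm (minarg u) a"
  shows "\<exists>c\<in>E. Conc c \<in> inc u"
proof -
  obtain c where c: "c \<in> E" "attacks inc nm c (minarg u)"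
    using defE[OF assms(3)] assms(2,4) unfolding defends_def by blast
  have "u \<in> L" using assms(1) SentSA_L by blast
  hence "nbar inc nm (minarg u) = {}" by (rule nbar_min)
  hence "Conc c \<in> inc u" using c(2) unfolding attacks_def Sent_min(1) by simp
  thus ?thesis using c(1) by blast
qed

lemma compat: "compatible inc (SentS E)"
  unfolding compatible_def
proof (intro ballI notI)
  fix s t assume st: "s \<in> SentS E" "t \<in> SentS E" "s \<in> inc t"
  obtain a where a: "a \<in> E" "s \<in> Sent a" using st(1) unfolding SentS_def by blast
  obtain b where b: "b \<in> E" "t \<in> Sent b" using st(2) unfolding SentS_def by blast
  have sA: "s \<in> SentS A" "t \<in> SentS A" using st SentS_mono by auto
  have ts: "t \<in> inc s" using symm[of s t] sA SentSA_L st(3) by blast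
  have "\<forall>s\<in>SentS A. \<forall>t\<in>SentS A. t \<in> inc s \<longrightarrow> minarg s \<in> A \<or> minarg t \<in> A"
    using sat unfolding saturated_def by blast
  hence "minarg t \<in> A \<or> minarg s \<in> A" using sA st(3) by blast
  thus False
  proof
    assume m: "minarg t \<in> A"
    have "attacks inc nm (minarg t) a" using a ts unfolding attacks_def Sent_min(2) by blast
    then obtain c where "c \<in> E" "Conc c \<in> inc t" using gen[OF sA(2) m a(1)] by blast
    moreover have "attacks inc nm c b" using calculation b unfolding attacks_def by blast
    ultimately show False using cf b by blast
  next
    assume m: "minarg s \<in> A"
    have "attacks inc nm (minarg s) b" using b st(3) unfolding attacks_def Sent_min(2) by blast
    then obtain c where "c \<in> E" "Conc c \<in> inc s" using gen[OF sA(1) m b(1)] by blast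
    moreover have "attacks inc nm c a" using calculation a unfolding attacks_def by blast
    ultimately show False using cf a by blast
  qed
qed

lemma key:
  assumes T: "compatible inc T" "SentS E \<subseteq> T" "T \<subseteq> SentS A"
  shows "is_Arg_w inc nm A T E"
proof -
  define X where "X = {a\<in>A. Sent a \<subseteq> T \<and> nbar inc nm a \<inter> T = {}}"
  have EX: "E \<subseteq> X"
  proof
    fix a assume a: "a \<in> E"
    have s: "Sent a \<subseteq> T" using a T(2) unfolding SentS_def by blast
    have "nbar inc nm a \<inter> T = {}"
    proof (rule ccontr)
      assume "nbar inc nm a \<inter> T \<noteq> {}"
      then obtain u where u: "u \<in> nbar inc nm a" "u \<in> T" by blast
      have uA: "u \<in> SentS A" using u T(3) by blast
      have aA: "a \<in> A" using a EA by blast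
      have "\<forall>u\<in>SentS A. (\<exists>a\<in>A. u \<in> nbar inc nm a) \<longrightarrow> minarg u \<in> A"
        using sat unfolding saturated_def by blast
      hence m: "minarg u \<in> A" using uA u aA by blast
      have "attacks inc nm (minarg u) a" using u unfolding attacks_def by (simp add: Sent_min)
      then obtain c where c: "c \<in> E" "Conc c \<in> inc u" using gen uA m a by blast
      have "Conc c \<in> Sent c" unfolding Sent_def by blast
      hence "Conc c \<in> T" using c(1) T(2) unfolding SentS_def by blast
      thus False using T(1) u c unfolding compatible_def by blast
    qed
    thus "a \<in> X" using s a EA unfolding X_def by blast
  qed
  have Xcf: "\<not> attacks inc nm a b" if ab: "a \<in> X" "b \<in> X" for a b
  proof
    assume at: "attacks inc nm a b"
    have sa: "Sent a \<subseteq> T" and sb': "Sent b \<subseteq> T" and nb: "nbar inc nm b \<inter> T = {}"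
      using ab unfolding X_def by blast+
    have "Conc a \<in> Sent a" unfolding Sent_def by blast
    hence ca: "Conc a \<in> T" using sa by blast
    have cT: "\<forall>s\<in>T. \<forall>t\<in>T. s \<notin> inc t" using T(1) unfolding compatible_def .
    show False using at
    proof (unfold attacks_def, elim disjE bexE)
      fix s assume "s \<in> Sent b" "Conc a \<in> inc s"
      thus False using sb' ca cT by blast
    next
      assume "Conc a \<in> nbar inc nm b"
      thus False using nb ca by blast
    qed
  qed
  have init: "is_Init inc nm A T E"
    unfolding is_Init_def Let_def
  proof (intro conjI allI impI)
    show "E \<subseteq> {a \<in> A. Sent a \<subseteq> T \<and> nbar inc nm a \<inter> T = {}}" using EX unfolding X_def .
    show "admissible inc nm A E" using adm .
  next
    fix J assume J: "J \<subseteq> {a \<in> A. Sent a \<subseteq> T \<and> nbar inc nm a \<inter> T = {}} \<and> admissible inc nm A J"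
    have JX: "J \<subseteq> X" using J unfolding X_def by blast
    have "admissible inc nm A (J \<union> E)"
      unfolding admissible_def conflict_free_def
    proof (intro conjI ballI)
      show "J \<union> E \<subseteq> A" using J EA unfolding admissible_def by blast
    next
      fix a b assume "a \<in> J \<union> E" "b \<in> J \<union> E"
      thus "\<not> attacks inc nm a b" using Xcf JX EX by blast
    next
      fix a assume a: "a \<in> J \<union> E"
      have dJ: "\<forall>x\<in>J. defends inc nm A J x" using J unfolding admissible_def by blast
      show "defends inc nm A (J \<union> E) a"
      proof (cases "a \<in> J")
        case True
        thus ?thesis using dJ defends_mono[of inc nm A J a "J \<union> E"] by blast
      next
        case False
        hence "a \<in> E" using a by blast
        thus ?thesis using defE defends_mono[of inc nm A E a "J \<union> E"] by blast
      qed
    qed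
    hence "J \<union> E = E" using pref unfolding preferred_def by blast
    thus "J \<subseteq> E" by blast
  qed
  have R: "R_S inc nm A T E = E"
  proof
    show "R_S inc nm A T E \<subseteq> E" unfolding R_S_def using fund[OF pref] by blast
    show "E \<subseteq> R_S inc nm A T E"
    proof
      fix a assume a: "a \<in> E"
      hence "a \<in> X" using EX by blast
      hence "a \<in> A" "Sent a \<subseteq> T" "nbar inc nm a \<inter> T = {}" unfolding X_def by blast+
      moreover have "Prem a \<subseteq> Sent a" unfolding Sent_def by blast
      ultimately show "a \<in> R_S inc nm A T E" unfolding R_S_def Arg_s_def using defE[OF a] by blast
    qed
  qed
  have "\<forall>F. E \<subseteq> F \<and> R_S inc nm A T F = F \<longrightarrow> E \<subseteq> F" by blast
  thus ?thesis unfolding is_Arg_w_def using init R by blast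
qed

lemma finSA: "finite (SentS A)"
proof -
  have "finite A" using sb unfolding SBAF_def by blast
  moreover have "\<And>a. a \<in> A \<Longrightarrow> finite (Sent a)"
    using sb unfolding SBAF_def is_argument_def Sent_def by blast
  ultimately show ?thesis unfolding SentS_def by (intro finite_UN_I)
qed

lemma main: "confident_weakly_coherent inc nm A E"
proof -
  have wc: "weakly_coherent inc nm A E"
    unfolding weakly_coherent_def using adm fund[OF pref] by blast
  have kE: "is_Arg_w inc nm A (SentS E) E" using key[OF compat order.refl SentS_mono] .
  have waE: "weakly_adequate inc nm A (SentS E)"
    unfolding weakly_adequate_def
  proof (intro conjI allI impI)
    show "compatible inc (SentS E)" using compat .
    show "SentS E \<subseteq> SentS A" using SentS_mono .
  next
    fix W assume "is_Arg_w inc nm A (SentS E) W"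
    hence "W = E" using kE by (rule Arg_w_unique)
    thus "\<forall>a\<in>W. Sent a \<subseteq> SentS E" unfolding SentS_def by blast
  qed
  define C where "C = {T. T \<subseteq> SentS A \<and> weakly_adequate inc nm A T \<and> SentS E \<subseteq> T}"
  have "C \<subseteq> Pow (SentS A)" unfolding C_def by blast
  hence fC: "finite C" using finSA by (simp add: finite_subset)
  have neC: "SentS E \<in> C" using waE SentS_mono unfolding C_def by blast
  obtain T where T: "T \<in> C" "\<forall>b\<in>C. T \<subseteq> b \<longrightarrow> T = b"
    using finite_has_maximal[OF fC] neC by blast
  have Tw: "weakly_adequate inc nm A T" "SentS E \<subseteq> T" "T \<subseteq> SentS A"
    using T(1) unfolding C_def by blast+
  have conf: "confident inc nm A T"
    unfolding confident_def
  proof (intro conjI allI impI)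
    show "weakly_adequate inc nm A T" using Tw(1) .
  next
    fix T' assume h: "weakly_adequate inc nm A T' \<and> T \<subseteq> T'"
    have "T' \<subseteq> SentS A" using h unfolding weakly_adequate_def by blast
    hence "T' \<in> C" using h Tw(2) unfolding C_def by blast
    thus "T' = T" using T(2) h by blast
  qed
  have "compatible inc T" using Tw(1) unfolding weakly_adequate_def by blast
  hence "is_Arg_w inc nm A T E" using key Tw(2,3) by blast
  thus ?thesis unfolding confident_weakly_coherent_def using wc conf by blast
qed

end

theorem mainTheorem17:
  fixes L :: "'s set" and inc :: "'s \<Rightarrow> 's set" and nm :: "'s arg \<Rightarrow> 's option"
    and A :: "'s arg set" and E :: "'s arg set"
  assumes "SBAF L inc nm A"
    and "saturated inc nm A"
    and "preferred inc nm A E"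
  shows "confident_weakly_coherent inc nm A E"
proof -
  interpret ctx L inc nm A E using assms by unfold_locales
  show ?thesis using main .
qed

end
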